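(* Let $X$ be a complex Banach space. Let $\mathcal{G}$ be an algebra with unit, $\mathcal{F}$ a unital subalgebra of $\mathcal{G}$, $\Phi:\mathcal{F}\to\mathcal{C}(X)$ a calculus, and $\mathcal{E}\subseteq\mathcal{F}$ a subalgebra which is an algebraic core for $\Phi$. Let $\mathcal{E}'$ be a subalgebra of $\mathcal{G}$ with $\mathcal{E}\subseteq\mathcal{E}'$ and $\Psi:\mathcal{E}'\to\mathcal{L}(X)$ an algebra representation with $\Psi|_{\mathcal{E}}=\Phi|_{\mathcal{E}}$. Let $\mathcal{F}':=\mathrm{anc}(\mathcal{E}',\mathcal{G},\Psi)$ and denote again by $\Psi:\mathcal{F}'\to\mathcal{C}(X)$ the unique calculus on $\mathcal{F}'$ extending $\Psi$. Let $f\in\mathcal{F}$. Then $f\in\mathcal{F}'$ and $\Phi(f)=\Psi(f)$ if any one of the following conditions holds: (1) $f\in\mathcal{F}'$ and $\Psi(f)\in\mathcal{L}(X)$; (2) $f\in\mathcal{F}'$, $\Psi(f)$ is densely defined, and $\Phi(f)\in\mathcal{L}(X)$; (3) for each $e'\in\mathcal{E}'$ there is a $\Psi$-anchor set $\mathcal{M}_{e'}\subseteq\mathcal{E}'$ such that $\mathcal{M}_{e'}e'\subseteq\mathcal{D}'\cdot[f]_{\mathcal{E}}$, where $\mathcal{D}':=\{d'\in\mathcal{F}': d'\mathcal{E}\subseteq\mathcal{E}'\}$; (4) $\mathcal{E}'=\mathcal{E}$; (5) $\mathrm{Z}(\mathcal{E}')\cap[f]_{\mathcal{E}}$ is a $\Psi$-anchor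 set; (6) $\mathcal{E}\subseteq\mathrm{Z}(\mathcal{E}')$; (7) $\mathcal{E}'$ is commutative.
   Context: Algebras need not be commutative; subalgebras need not be unital. $\mathcal{L}(X)$, $\mathcal{C}(X)$: bounded, resp. closed linear operators on $X$; operator inclusions are graph inclusions, sums/products have natural domains, "$Tx=y$" means $x\in\mathrm{dom}(T)$, $Tx=y$. Proto-calculus $\Phi:\mathcal{F}\to\mathcal{C}(X)$: (FC1) $\Phi(\mathbf{1})=I$; (FC2) $\lambda\Phi(f)\subseteq\Phi(\lambda f)$, $\Phi(f)+\Phi(g)\subseteq\Phi(f+g)$; (FC3) $\Phi(f)\Phi(g)\subseteq\Phi(fg)$, $\mathrm{dom}(\Phi(f)\Phi(g))=\mathrm{dom}(\Phi(g))\cap\mathrm{dom}(\Phi(fg))$. For a subset $\mathcal{E}$ and element $f$, $[f]_{\mathcal{E}}=\{e\in\mathcal{E}:ef\in\mathcal{E}\}$. $\mathcal{E}\subseteq\{g:\Phi(g)\in\mathcal{L}(X)\}$ is an algebraic core for $\Phi$ if for all $f\in\mathcal{F}$, $x,y\in X$: $\Phi(f)x=y\iff\Phi(ef)x=\Phi(e)y$ for all $e\in[f]_{\mathcal{E}}$; a calculus is a proto-calculus for which the set of $\Phi$-bounded elements is an algebraic core. For a representation $\Psi$ on $\mathcal{E}'$, a $\Psi$-anchor set is a nonempty $\mathcal{M}\subseteq\mathcal{E}'$ with $\bigcap_{e\in\mathcal{M}}\ker\Psi(e)=\{0\}$. $\mathrm{anc}(\mathcal{E}',\mathcal{G},\Psi):=\{g\in\mathcal{G}: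 [e'g]_{\mathcal{E}'}$ is a $\Psi$-anchor set for all $e'\in\mathcal{E}'\}$; in the present situation this is a unital subalgebra of $\mathcal{G}$ containing $\mathcal{E}'$, and the calculus extending $\Psi$ to it is given by $\Psi(g)x=y\iff\Psi(e'g)x=\Psi(e')y$ for all $e'\in[g]_{\mathcal{E}'}$. $\mathrm{Z}(\mathcal{E}')=\{d\in\mathcal{E}': de=ed\ \forall e\in\mathcal{E}'\}$ is the center. $\mathcal{D}'\cdot[f]_{\mathcal{E}}=\{de: d\in\mathcal{D}', e\in[f]_{\mathcal{E}}\}$. *)

theory Defs
  imports "HOL-Analysis.Analysis"
begin

text \<open>A complex Banach space is modelled as a real Banach space (type class banach)
together with a complex scalar multiplication cs extending the real one and
compatible with the norm.\<close>

definition complex_banach_scal :: "(complex \<Rightarrow> 'x::banach \<Rightarrow> 'x) \<Rightarrow> bool" where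
  "complex_banach_scal cs \<longleftrightarrow>
     (\<forall>r x. cs (complex_of_real r) x = r *\<^sub>R x) \<and>
     (\<forall>a b x. cs (a + b) x = cs a x + cs b x) \<and>
     (\<forall>a x y. cs a (x + y) = cs a x + cs a y) \<and>
     (\<forall>a b x. cs (a * b) x = cs a (cs b x)) \<and>
     (\<forall>a x. norm (cs a x) = cmod a * norm x)"

type_synonym 'x op = "('x \<times> 'x) set"

definition is_op :: "(complex \<Rightarrow> 'x::banach \<Rightarrow> 'x) \<Rightarrow> 'x op \<Rightarrow> bool" where
  "is_op cs T \<longleftrightarrow> (0, 0) \<in> T \<and>
     (\<forall>p\<in>T. \<forall>q\<in>T. p + q \<in> T) \<and>
     (\<forall>a. \<forall>(x, y)\<in>T. (cs a x, cs a y) \<in> T) \<and>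
     (\<forall>x y z. (x, y) \<in> T \<longrightarrow> (x, z) \<in> T \<longrightarrow> y = z)"

definition closed_op :: "(complex \<Rightarrow> 'x::banach \<Rightarrow> 'x) \<Rightarrow> 'x op \<Rightarrow> bool" where
  "closed_op cs T \<longleftrightarrow> is_op cs T \<and> closed T"

definition bounded_op :: "(complex \<Rightarrow> 'x::banach \<Rightarrow> 'x) \<Rightarrow> 'x op \<Rightarrow> bool" where
  "bounded_op cs T \<longleftrightarrow> closed_op cs T \<and> Domain T = UNIV \<and>
     (\<exists>K. \<forall>(x, y)\<in>T. norm y \<le> K * norm x)"

definition op_id :: "'x op" where
  "op_id = {(x, x) | x. True}"

definition op_scal :: "(complex \<Rightarrow> 'x \<Rightarrow> 'x) \<Rightarrow> complex \<Rightarrow> 'x op \<Rightarrow> 'x op" where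
  "op_scal cs a T = {(x, cs a y) | x y. (x, y) \<in> T}"

definition op_sum :: "'x::ab_group_add op \<Rightarrow> 'x op \<Rightarrow> 'x op" where
  "op_sum S T = {(x, y + z) | x y z. (x, y) \<in> S \<and> (x, z) \<in> T}"

text \<open>op_comp S T is the product S T (first T, then S), natural domain\<close>
definition op_comp :: "'x op \<Rightarrow> 'x op \<Rightarrow> 'x op" where
  "op_comp S T = {(x, z) | x y z. (x, y) \<in> T \<and> (y, z) \<in> S}"

text \<open>The ambient unital algebra G is the type 'g (a ring with 1), together with a
complex scalar multiplication sm making it a complex algebra.\<close>

definition complex_alg :: "(complex \<Rightarrow> 'g::ring_1 \<Rightarrow> 'g) \<Rightarrow> bool" where
  "complex_alg sm \<longleftrightarrow>
     (\<forall>x. sm 1 x = x) \<and>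
     (\<forall>a b x. sm (a * b) x = sm a (sm b x)) \<and>
     (\<forall>a b x. sm (a + b) x = sm a x + sm b x) \<and>
     (\<forall>a x y. sm a (x + y) = sm a x + sm a y) \<and>
     (\<forall>a x y. sm a (x * y) = sm a x * y) \<and>
     (\<forall>a x y. sm a (x * y) = x * sm a y)"

definition subalgebra :: "(complex \<Rightarrow> 'g::ring_1 \<Rightarrow> 'g) \<Rightarrow> 'g set \<Rightarrow> bool" where
  "subalgebra sm S \<longleftrightarrow> 0 \<in> S \<and>
     (\<forall>x\<in>S. \<forall>y\<in>S. x + y \<in> S) \<and>
     (\<forall>x\<in>S. \<forall>y\<in>S. x * y \<in> S) \<and>
     (\<forall>a. \<forall>x\<in>S. sm a x \<in> S)"

definition unital_subalgebra :: "(complex \<Rightarrow> 'g::ring_1 \<Rightarrow> 'g) \<Rightarrow> 'g set \<Rightarrow> bool" where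
  "unital_subalgebra sm S \<longleftrightarrow> subalgebra sm S \<and> 1 \<in> S"

definition center :: "'g::ring_1 set \<Rightarrow> 'g set" where
  "center E = {d \<in> E. \<forall>e\<in>E. d * e = e * d}"

definition bracket :: "'g::ring_1 set \<Rightarrow> 'g \<Rightarrow> 'g set" where
  "bracket E f = {e \<in> E. e * f \<in> E}"

definition proto_calculus ::
  "(complex \<Rightarrow> 'g::ring_1 \<Rightarrow> 'g) \<Rightarrow> (complex \<Rightarrow> 'x::banach \<Rightarrow> 'x) \<Rightarrow> 'g set \<Rightarrow> ('g \<Rightarrow> 'x op) \<Rightarrow> bool" where
  "proto_calculus sm cs F \<Phi> \<longleftrightarrow>
     (\<forall>f\<in>F. closed_op cs (\<Phi> f)) \<and>
     \<Phi> 1 = op_id \<and>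
     (\<forall>a. \<forall>f\<in>F. op_scal cs a (\<Phi> f) \<subseteq> \<Phi> (sm a f)) \<and>
     (\<forall>f\<in>F. \<forall>g\<in>F. op_sum (\<Phi> f) (\<Phi> g) \<subseteq> \<Phi> (f + g)) \<and>
     (\<forall>f\<in>F. \<forall>g\<in>F. op_comp (\<Phi> f) (\<Phi> g) \<subseteq> \<Phi> (f * g) \<and>
        Domain (op_comp (\<Phi> f) (\<Phi> g)) = Domain (\<Phi> g) \<inter> Domain (\<Phi> (f * g)))"

definition bounded_elems ::
  "(complex \<Rightarrow> 'x::banach \<Rightarrow> 'x) \<Rightarrow> 'g set \<Rightarrow> ('g \<Rightarrow> 'x op) \<Rightarrow> 'g set" where
  "bounded_elems cs F \<Phi> = {g \<in> F. bounded_op cs (\<Phi> g)}"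

definition algebraic_core ::
  "(complex \<Rightarrow> 'x::banach \<Rightarrow> 'x) \<Rightarrow> 'g::ring_1 set \<Rightarrow> ('g \<Rightarrow> 'x op) \<Rightarrow> 'g set \<Rightarrow> bool" where
  "algebraic_core cs F \<Phi> E \<longleftrightarrow>
     E \<subseteq> bounded_elems cs F \<Phi> \<and>
     (\<forall>f\<in>F. \<forall>x y. (x, y) \<in> \<Phi> f \<longleftrightarrow>
        (\<forall>e\<in>bracket E f. \<exists>z. (y, z) \<in> \<Phi> e \<and> (x, z) \<in> \<Phi> (e * f)))"

definition calculus ::
  "(complex \<Rightarrow> 'g::ring_1 \<Rightarrow> 'g) \<Rightarrow> (complex \<Rightarrow> 'x::banach \<Rightarrow> 'x) \<Rightarrow> 'g set \<Rightarrow> ('g \<Rightarrow> 'x op) \<Rightarrow> bool" where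
  "calculus sm cs F \<Phi> \<longleftrightarrow> proto_calculus sm cs F \<Phi> \<and>
     algebraic_core cs F \<Phi> (bounded_elems cs F \<Phi>)"

definition alg_representation ::
  "(complex \<Rightarrow> 'g::ring_1 \<Rightarrow> 'g) \<Rightarrow> (complex \<Rightarrow> 'x::banach \<Rightarrow> 'x) \<Rightarrow> 'g set \<Rightarrow> ('g \<Rightarrow> 'x op) \<Rightarrow> bool" where
  "alg_representation sm cs E \<Psi> \<longleftrightarrow>
     (\<forall>e\<in>E. bounded_op cs (\<Psi> e)) \<and>
     (\<forall>a. \<forall>e\<in>E. \<Psi> (sm a e) = op_scal cs a (\<Psi> e)) \<and>
     (\<forall>e\<in>E. \<forall>d\<in>E. \<Psi> (e + d) = op_sum (\<Psi> e) (\<Psi> d)) \<and>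
     (\<forall>e\<in>E. \<forall>d\<in>E. \<Psi> (e * d) = op_comp (\<Psi> e) (\<Psi> d))"

definition anchor_set :: "'g set \<Rightarrow> ('g \<Rightarrow> 'x::banach op) \<Rightarrow> 'g set \<Rightarrow> bool" where
  "anchor_set E \<Psi> M \<longleftrightarrow> M \<noteq> {} \<and> M \<subseteq> E \<and>
     (\<forall>x. (\<forall>e\<in>M. (x, 0) \<in> \<Psi> e) \<longrightarrow> x = 0)"

text \<open>anc(E', G, Psi) with G = UNIV (the whole type 'g)\<close>
definition anc :: "'g::ring_1 set \<Rightarrow> ('g \<Rightarrow> 'x::banach op) \<Rightarrow> 'g set" where
  "anc E \<Psi> = {g. \<forall>e\<in>E. anchor_set E \<Psi> (bracket E (e * g))}"

text \<open>the calculus on anc(E', G, Psi) extending Psi\<close>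
definition anc_ext :: "'g::ring_1 set \<Rightarrow> ('g \<Rightarrow> 'x::banach op) \<Rightarrow> 'g \<Rightarrow> 'x op" where
  "anc_ext E \<Psi> g = {(x, y). \<forall>e\<in>bracket E g. \<exists>z. (y, z) \<in> \<Psi> e \<and> (x, z) \<in> \<Psi> (e * g)}"

end

theory Submission
  imports Defs
begin

definition ap :: "'x op \<Rightarrow> 'x \<Rightarrow> 'x" where "ap T x = (SOME y. (x, y) \<in> T)"

lemma bop_mem:
  assumes "bounded_op cs T" shows "(x, y) \<in> T \<longleftrightarrow> y = ap T x"
proof -
  from assms have D: "Domain T = UNIV" and op: "is_op cs T"
    by (auto simp: bounded_op_def closed_op_def)
  from D obtain y0 where y0: "(x, y0) \<in> T" by blast
  hence a: "(x, ap T x) \<in> T" unfolding ap_def by (rule someI)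
  show ?thesis using a op unfolding is_op_def by blast
qed

lemma bop_bl:
  assumes X: "complex_banach_scal cs" and T: "bounded_op cs T"
  shows "bounded_linear (ap T)"
proof -
  have op: "is_op cs T" using T by (auto simp: bounded_op_def closed_op_def)
  have m: "(x, ap T x) \<in> T" for x using bop_mem[OF T] by blast
  obtain K where K: "\<forall>(x, y)\<in>T. norm y \<le> K * norm x" using T bounded_op_def by blast
  show ?thesis
  proof (rule bounded_linear_intro)
    show "ap T (x + y) = ap T x + ap T y" for x y
    proof -
      have "(x, ap T x) + (y, ap T y) \<in> T" using op m unfolding is_op_def by blast
      hence "(x + y, ap T x + ap T y) \<in> T" by simp
      thus ?thesis using bop_mem[OF T] by simp
    qed
    show "ap T (r *\<^sub>R x) = r *\<^sub>R ap T x" for r x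
    proof -
      have "\<forall>(x, y)\<in>T. (cs (complex_of_real r) x, cs (complex_of_real r) y) \<in> T"
        using op unfolding is_op_def by blast
      hence "(cs (complex_of_real r) x, cs (complex_of_real r) (ap T x)) \<in> T" using m by fast
      moreover have "cs (complex_of_real r) z = r *\<^sub>R z" for z
        using X unfolding complex_banach_scal_def by blast
      ultimately have "(r *\<^sub>R x, r *\<^sub>R ap T x) \<in> T" by simp
      thus ?thesis using bop_mem[OF T] by simp
    qed
    show "norm (ap T x) \<le> norm x * K" for x
      using K m[of x] by (auto simp: mult.commute)
  qed
qed

theorem theorem6p7:
  fixes cs :: "complex \<Rightarrow> 'x::banach \<Rightarrow> 'x"
    and sm :: "complex \<Rightarrow> 'g::ring_1 \<Rightarrow> 'g"
    and F E E' :: "'g set"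
    and \<Phi> \<Psi> :: "'g \<Rightarrow> 'x op"
    and f :: 'g
  assumes X: "complex_banach_scal cs"
    and G: "complex_alg sm"
    and F: "unital_subalgebra sm F"
    and Phi: "calculus sm cs F \<Phi>"
    and E: "subalgebra sm E" "E \<subseteq> F"
    and core: "algebraic_core cs F \<Phi> E"
    and E': "subalgebra sm E'" "E \<subseteq> E'"
    and Psi: "alg_representation sm cs E' \<Psi>"
    and agree: "\<forall>e\<in>E. \<Psi> e = \<Phi> e"
    and f: "f \<in> F"
    and cond:
      "(f \<in> anc E' \<Psi> \<and> bounded_op cs (anc_ext E' \<Psi> f))
     \<or> (f \<in> anc E' \<Psi> \<and> closure (Domain (anc_ext E' \<Psi> f)) = UNIV \<and> bounded_op cs (\<Phi> f))
     \<or> (\<forall>e'\<in>E'. \<exists>M. anchor_set E' \<Psi> M \<and>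
          (\<lambda>m. m * e') ` M \<subseteq>
            {d * e | d e. d \<in> {d' \<in> anc E' \<Psi>. \<forall>e\<in>E. d' * e \<in> E'} \<and> e \<in> bracket E f})
     \<or> E' = E
     \<or> anchor_set E' \<Psi> (center E' \<inter> bracket E f)
     \<or> E \<subseteq> center E'
     \<or> (\<forall>a\<in>E'. \<forall>b\<in>E'. a * b = b * a)"
  shows "f \<in> anc E' \<Psi> \<and> \<Phi> f = anc_ext E' \<Psi> f"
proof -
  define P where "P = (\<lambda>e. ap (\<Psi> e))"
  have E0: "0 \<in> E" and Emul: "\<And>a b. a \<in> E \<Longrightarrow> b \<in> E \<Longrightarrow> a * b \<in> E"
    using E(1) unfolding subalgebra_def by auto
  have E'0: "0 \<in> E'" and E'mul: "\<And>a b. a \<in> E' \<Longrightarrow> b \<in> E' \<Longrightarrow> a * b \<in> E'"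
    using E'(1) unfolding subalgebra_def by auto
  have F1: "1 \<in> F" and Fmul: "\<And>a b. a \<in> F \<Longrightarrow> b \<in> F \<Longrightarrow> a * b \<in> F"
    using F unfolding unital_subalgebra_def subalgebra_def by auto
  have PB: "\<And>e. e \<in> E' \<Longrightarrow> bounded_op cs (\<Psi> e)"
    using Psi unfolding alg_representation_def by blast
  have Pmem: "\<And>e x y. e \<in> E' \<Longrightarrow> (x, y) \<in> \<Psi> e \<longleftrightarrow> y = P e x"
    unfolding P_def using bop_mem PB by blast
  have Pbl: "\<And>e. e \<in> E' \<Longrightarrow> bounded_linear (P e)"
    unfolding P_def using bop_bl[OF X] PB by blast
  have Pdiff: "\<And>e x y. e \<in> E' \<Longrightarrow> P e (x - y) = P e x - P e y"
    using Pbl bounded_linear.linear linear_diff by metis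
  have P0: "\<And>e. e \<in> E' \<Longrightarrow> P e 0 = 0"
    using Pbl bounded_linear.linear linear_0 by metis
  have Pmul: "\<And>a b x. a \<in> E' \<Longrightarrow> b \<in> E' \<Longrightarrow> P (a * b) x = P a (P b x)"
  proof -
    fix a b x assume a: "a \<in> E'" and b: "b \<in> E'"
    have eq: "\<Psi> (a * b) = op_comp (\<Psi> a) (\<Psi> b)"
      using Psi a b unfolding alg_representation_def by blast
    have "(x, P a (P b x)) \<in> op_comp (\<Psi> a) (\<Psi> b)"
      unfolding op_comp_def using Pmem[OF a] Pmem[OF b] by blast
    hence "(x, P a (P b x)) \<in> \<Psi> (a * b)" using eq by simp
    thus "P (a * b) x = P a (P b x)" using Pmem[OF E'mul[OF a b]] by simp
  qed
  have Phi1: "\<Phi> 1 = op_id" and Phicl: "\<forall>g\<in>F. closed_op cs (\<Phi> g)"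
    using Phi unfolding calculus_def proto_calculus_def by auto
  have coreF: "\<And>g x y. g \<in> F \<Longrightarrow> (x, y) \<in> \<Phi> g \<longleftrightarrow>
      (\<forall>e\<in>bracket E g. \<exists>z. (y, z) \<in> \<Phi> e \<and> (x, z) \<in> \<Phi> (e * g))"
    using core unfolding algebraic_core_def by blast
  have Phiop: "\<And>g. g \<in> F \<Longrightarrow> is_op cs (\<Phi> g)" using Phicl closed_op_def by blast
  have E'anch: "\<And>u. (\<forall>e\<in>E'. P e u = 0) \<Longrightarrow> u = 0"
  proof -
    fix u assume H: "\<forall>e\<in>E'. P e u = 0"
    have "\<forall>e\<in>bracket E 1. \<exists>z. (u, z) \<in> \<Phi> e \<and> (0, z) \<in> \<Phi> (e * 1)"
    proof
      fix e assume "e \<in> bracket E 1"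
      hence e: "e \<in> E" "e \<in> E'" using E'(2) bracket_def by auto
      have "(u, 0) \<in> \<Psi> e" "(0, 0) \<in> \<Psi> e" using H e Pmem[OF e(2)] P0[OF e(2)] by auto
      hence "(u, 0) \<in> \<Phi> e" "(0, 0) \<in> \<Phi> (e * 1)" using agree e(1) by auto
      thus "\<exists>z. (u, z) \<in> \<Phi> e \<and> (0, z) \<in> \<Phi> (e * 1)" by blast
    qed
    hence "(0, u) \<in> \<Phi> 1" using coreF[OF F1] by blast
    thus "u = 0" using Phi1 unfolding op_id_def by auto
  qed
  have anchD: "\<And>M u. anchor_set E' \<Psi> M \<Longrightarrow> (\<forall>m\<in>M. P m u = 0) \<Longrightarrow> u = 0"
  proof -
    fix M u assume M: "anchor_set E' \<Psi> M" and H: "\<forall>m\<in>M. P m u = 0"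
    have "\<forall>m\<in>M. (u, 0) \<in> \<Psi> m"
    proof
      fix m assume m: "m \<in> M"
      hence "m \<in> E'" using M unfolding anchor_set_def by blast
      thus "(u, 0) \<in> \<Psi> m" using Pmem H m by simp
    qed
    thus "u = 0" using M unfolding anchor_set_def by blast
  qed
  have anch_mono: "\<And>M N. anchor_set E' \<Psi> M \<Longrightarrow> M \<subseteq> N \<Longrightarrow> N \<subseteq> E' \<Longrightarrow> anchor_set E' \<Psi> N"
    unfolding anchor_set_def by blast
  have E'_anchor: "anchor_set E' \<Psi> E'"
  proof -
    have "x = 0" if H: "\<forall>e\<in>E'. (x, 0) \<in> \<Psi> e" for x
    proof (rule E'anch, intro ballI)
      fix e assume "e \<in> E'"
      thus "P e x = 0" using H Pmem by metis
    qed
    thus ?thesis unfolding anchor_set_def using E'0 by blast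
  qed
  have brE_anchor: "\<And>g. g \<in> F \<Longrightarrow> anchor_set E' \<Psi> (bracket E g)"
  proof -
    fix g assume g: "g \<in> F"
    have "0 \<in> bracket E g" using E0 unfolding bracket_def by simp
    moreover have sub: "bracket E g \<subseteq> E'" using E'(2) unfolding bracket_def by auto
    moreover have "x = 0" if H: "\<forall>e\<in>bracket E g. (x, 0) \<in> \<Psi> e" for x
    proof -
      have "\<forall>e\<in>bracket E g. \<exists>z. (x, z) \<in> \<Phi> e \<and> (0, z) \<in> \<Phi> (e * g)"
      proof
        fix e assume e: "e \<in> bracket E g"
        hence eg: "e * g \<in> E'" "e * g \<in> E" "e \<in> E" using E'(2) bracket_def by auto
        show "\<exists>z. (x, z) \<in> \<Phi> e \<and> (0, z) \<in> \<Phi> (e * g)"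
          using H e eg agree Pmem[OF eg(1)] P0[OF eg(1)] by (intro exI[of _ 0]) auto
      qed
      hence "(0, x) \<in> \<Phi> g" using coreF[OF g] by blast
      moreover have "(0, 0) \<in> \<Phi> g" using Phiop[OF g] unfolding is_op_def by blast
      ultimately show "x = 0" using Phiop[OF g] unfolding is_op_def by blast
    qed
    ultimately show "anchor_set E' \<Psi> (bracket E g)" unfolding anchor_set_def by blast
  qed
  have E'_in_anc: "E' \<subseteq> anc E' \<Psi>"
  proof
    fix g assume g: "g \<in> E'"
    have "bracket E' (e * g) = E'" if "e \<in> E'" for e
      using E'mul that g unfolding bracket_def by auto
    thus "g \<in> anc E' \<Psi>" unfolding anc_def using E'_anchor by simp
  qed
  have one_anc: "1 \<in> anc E' \<Psi>"
  proof -
    have "bracket E' (e * 1) = E'" if "e \<in> E'" for e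
      using E'mul that unfolding bracket_def by auto
    thus ?thesis unfolding anc_def using E'_anchor by simp
  qed
  have Phi_char: "\<And>x y. (x, y) \<in> \<Phi> f \<longleftrightarrow> (\<forall>e\<in>bracket E f. P e y = P (e * f) x)"
  proof -
    fix x y
    have "(\<exists>z. (y, z) \<in> \<Phi> e \<and> (x, z) \<in> \<Phi> (e * f)) \<longleftrightarrow> P e y = P (e * f) x"
      if e: "e \<in> bracket E f" for e
    proof -
      have a: "e \<in> E" "e * f \<in> E" "e \<in> E'" "e * f \<in> E'" using e E'(2) bracket_def by auto
      show ?thesis using agree a Pmem[OF a(3)] Pmem[OF a(4)] by auto
    qed
    thus "(x, y) \<in> \<Phi> f \<longleftrightarrow> (\<forall>e\<in>bracket E f. P e y = P (e * f) x)"
      using coreF[OF f] by simp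
  qed
  have Psi_char: "\<And>x y. (x, y) \<in> anc_ext E' \<Psi> f \<longleftrightarrow> (\<forall>e\<in>bracket E' f. P e y = P (e * f) x)"
  proof -
    fix x y
    have "(\<exists>z. (y, z) \<in> \<Psi> e \<and> (x, z) \<in> \<Psi> (e * f)) \<longleftrightarrow> P e y = P (e * f) x"
      if e: "e \<in> bracket E' f" for e
    proof -
      have a: "e \<in> E'" "e * f \<in> E'" using e bracket_def by auto
      show ?thesis using a Pmem[OF a(1)] Pmem[OF a(2)] by auto
    qed
    thus "(x, y) \<in> anc_ext E' \<Psi> f \<longleftrightarrow> (\<forall>e\<in>bracket E' f. P e y = P (e * f) x)"
      unfolding anc_ext_def by simp
  qed
  have brsub: "bracket E f \<subseteq> bracket E' f" using E'(2) unfolding bracket_def by auto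
  have sub: "anc_ext E' \<Psi> f \<subseteq> \<Phi> f"
  proof clarify
    fix x y assume "(x, y) \<in> anc_ext E' \<Psi> f"
    thus "(x, y) \<in> \<Phi> f" using Psi_char Phi_char brsub by blast
  qed
  have fop: "is_op cs (\<Phi> f)" using Phiop f by blast
  have main3: ?thesis if C3: "\<forall>e'\<in>E'. \<exists>M. anchor_set E' \<Psi> M \<and>
          (\<lambda>m. m * e') ` M \<subseteq>
            {d * e | d e. d \<in> {d' \<in> anc E' \<Psi>. \<forall>e\<in>E. d' * e \<in> E'} \<and> e \<in> bracket E f}"
  proof -
    have "f \<in> anc E' \<Psi>"
      unfolding anc_def
    proof (intro CollectI ballI)
      fix e' assume e': "e' \<in> E'"
      from bspec[OF C3 e'] obtain M where M: "anchor_set E' \<Psi> M" and MS: "(\<lambda>m. m * e') ` M \<subseteq>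
            {d * e | d e. d \<in> {d' \<in> anc E' \<Psi>. \<forall>e\<in>E. d' * e \<in> E'} \<and> e \<in> bracket E f}"
        by (elim exE conjE)
      have "M \<subseteq> bracket E' (e' * f)"
      proof
        fix m assume m: "m \<in> M"
        hence mE': "m \<in> E'" using M unfolding anchor_set_def by auto
        have "m * e' \<in> (\<lambda>m. m * e') ` M" using m by (rule imageI)
        with MS have "m * e' \<in> {d * e | d e. d \<in> {d' \<in> anc E' \<Psi>. \<forall>e\<in>E. d' * e \<in> E'} \<and> e \<in> bracket E f}"
          by (rule subsetD)
        then obtain d e where de: "m * e' = d * e" "\<forall>e\<in>E. d * e \<in> E'" "e \<in> bracket E f"
          by auto
        have "m * (e' * f) = d * (e * f)" using de(1) by (metis mult.assoc)
        moreover have "e * f \<in> E" using de(3) bracket_def by auto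
        ultimately show "m \<in> bracket E' (e' * f)" using de(2) mE' unfolding bracket_def by auto
      qed
      moreover have "bracket E' (e' * f) \<subseteq> E'" unfolding bracket_def by auto
      ultimately show "anchor_set E' \<Psi> (bracket E' (e' * f))" by (rule anch_mono[OF M])
    qed
    moreover have "\<Phi> f \<subseteq> anc_ext E' \<Psi> f"
    proof clarify
      fix x y assume "(x, y) \<in> \<Phi> f"
      then have H: "\<forall>e\<in>bracket E f. P e y = P (e * f) x" using Phi_char by simp
      show "(x, y) \<in> anc_ext E' \<Psi> f" unfolding Psi_char
      proof
        fix e' assume e': "e' \<in> bracket E' f"
        then have e'E': "e' \<in> E'" and e'f: "e' * f \<in> E'" unfolding bracket_def by auto
        define v where "v = P e' y - P (e' * f) x"
        from bspec[OF C3 e'E'] obtain M where M: "anchor_set E' \<Psi> M" and MS: "(\<lambda>m. m * e') ` M \<subseteq>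
            {d * e | d e. d \<in> {d' \<in> anc E' \<Psi>. \<forall>e\<in>E. d' * e \<in> E'} \<and> e \<in> bracket E f}"
          by (elim exE conjE)
        have "\<forall>m\<in>M. P m v = 0"
        proof
          fix m assume m: "m \<in> M"
          hence mE': "m \<in> E'" using M unfolding anchor_set_def by auto
          have "m * e' \<in> (\<lambda>m. m * e') ` M" using m by (rule imageI)
          with MS have "m * e' \<in> {d * e | d e. d \<in> {d' \<in> anc E' \<Psi>. \<forall>e\<in>E. d' * e \<in> E'} \<and> e \<in> bracket E f}"
            by (rule subsetD)
          then obtain d e where de: "m * e' = d * e" "d \<in> anc E' \<Psi>" "\<forall>e\<in>E. d * e \<in> E'"
            "e \<in> bracket E f"
            by auto
          have eE: "e \<in> E" "e \<in> E'" and efE: "e * f \<in> E" "e * f \<in> E'"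
            using de(4) E'(2) bracket_def by auto
          have Pmv0: "P m v = P (m * e') y - P (m * (e' * f)) x"
            unfolding v_def using Pdiff[OF mE'] Pmul[OF mE' e'E'] Pmul[OF mE' e'f] by simp
          have assoc: "m * (e' * f) = d * (e * f)" using de(1) by (metis mult.assoc)
          have Pmv: "P m v = P (d * e) y - P (d * (e * f)) x" using Pmv0 unfolding assoc de(1) .
          define u where "u = P (d * e) y - P (d * (e * f)) x"
          have deE': "d * e \<in> E'" using de(1) mE' e'E' E'mul by metis
          have defE': "d * (e * f) \<in> E'" using de(3) efE(1) by simp
          have "u = 0"
          proof (rule E'anch, intro ballI)
            fix e1 assume e1: "e1 \<in> E'"
            have e1d: "anchor_set E' \<Psi> (bracket E' (e1 * d))" using de(2) e1 unfolding anc_def by simp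
            show "P e1 u = 0"
            proof (rule anchD[OF e1d], intro ballI)
              fix e'' assume e'': "e'' \<in> bracket E' (e1 * d)"
              hence e''E': "e'' \<in> E'" and c: "e'' * (e1 * d) \<in> E'" unfolding bracket_def by auto
              have ee1: "e'' * e1 \<in> E'" by (rule E'mul[OF e''E' e1])
              have "P e'' (P e1 u) = P (e'' * e1) u" using Pmul[OF e''E' e1] by simp
              also have "\<dots> = P (e'' * e1) (P (d * e) y) - P (e'' * e1) (P (d * (e * f)) x)"
                unfolding u_def using Pdiff[OF ee1] by simp
              also have "\<dots> = P (e'' * e1 * (d * e)) y - P (e'' * e1 * (d * (e * f))) x"
                using Pmul[OF ee1 deE'] Pmul[OF ee1 defE'] by simp
              also have "\<dots> = P ((e'' * (e1 * d)) * e) y - P ((e'' * (e1 * d)) * (e * f)) x"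
                by (simp add: mult.assoc)
              also have "\<dots> = P (e'' * (e1 * d)) (P e y) - P (e'' * (e1 * d)) (P (e * f) x)"
                using Pmul[OF c eE(2)] Pmul[OF c efE(2)] by simp
              also have "\<dots> = 0" using H de(4) by simp
              finally show "P e'' (P e1 u) = 0" .
            qed
          qed
          thus "P m v = 0" using Pmv u_def by simp
        qed
        hence "v = 0" by (rule anchD[OF M])
        thus "P e' y = P (e' * f) x" unfolding v_def by simp
      qed
    qed
    ultimately show ?thesis using sub by (intro conjI subset_antisym)
  qed
  show ?thesis
    using cond
  proof (elim disjE)
    assume c: "f \<in> anc E' \<Psi> \<and> bounded_op cs (anc_ext E' \<Psi> f)"
    have "\<Phi> f \<subseteq> anc_ext E' \<Psi> f"
    proof clarify
      fix x y assume xy: "(x, y) \<in> \<Phi> f"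
      have "Domain (anc_ext E' \<Psi> f) = UNIV" using c bounded_op_def by blast
      then obtain y' where y': "(x, y') \<in> anc_ext E' \<Psi> f" by blast
      hence "(x, y') \<in> \<Phi> f" using sub by blast
      hence "y = y'" using xy fop unfolding is_op_def by blast
      thus "(x, y) \<in> anc_ext E' \<Psi> f" using y' by simp
    qed
    thus ?thesis using c sub by (intro conjI subset_antisym) auto
  next
    assume c: "f \<in> anc E' \<Psi> \<and> closure (Domain (anc_ext E' \<Psi> f)) = UNIV \<and> bounded_op cs (\<Phi> f)"
    define B where "B = ap (\<Phi> f)"
    have Bmem: "\<And>x y. (x, y) \<in> \<Phi> f \<longleftrightarrow> y = B x" unfolding B_def using bop_mem c by blast
    have Bbl: "bounded_linear B" unfolding B_def using bop_bl[OF X] c by blast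
    have all: "P e' (B x) = P (e' * f) x" if e': "e' \<in> bracket E' f" for e' x
    proof -
      have a: "e' \<in> E'" "e' * f \<in> E'" using e' bracket_def by auto
      define S where "S = {x. P e' (B x) = P (e' * f) x}"
      have "closed S" unfolding S_def
        by (intro closed_Collect_eq linear_continuous_on bounded_linear_compose[OF Pbl[OF a(1)] Bbl] Pbl[OF a(2)])
      moreover have "Domain (anc_ext E' \<Psi> f) \<subseteq> S"
      proof
        fix x assume "x \<in> Domain (anc_ext E' \<Psi> f)"
        then obtain w where w: "(x, w) \<in> anc_ext E' \<Psi> f" by blast
        hence "w = B x" using sub Bmem by blast
        thus "x \<in> S" using w Psi_char e' unfolding S_def by blast
      qed
      ultimately have "closure (Domain (anc_ext E' \<Psi> f)) \<subseteq> S" by (rule closure_minimal[rotated])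
      thus ?thesis using c unfolding S_def by blast
    qed
    have "\<Phi> f \<subseteq> anc_ext E' \<Psi> f"
    proof clarify
      fix x y assume xy: "(x, y) \<in> \<Phi> f"
      hence "y = B x" using Bmem by blast
      thus "(x, y) \<in> anc_ext E' \<Psi> f" using all Psi_char by blast
    qed
    thus ?thesis using c sub by (intro conjI subset_antisym) auto
  next
    assume c: "\<forall>e'\<in>E'. \<exists>M. anchor_set E' \<Psi> M \<and>
          (\<lambda>m. m * e') ` M \<subseteq>
            {d * e | d e. d \<in> {d' \<in> anc E' \<Psi>. \<forall>e\<in>E. d' * e \<in> E'} \<and> e \<in> bracket E f}"
    show ?thesis by (rule main3[OF c])
  next
    assume c: "E' = E"
    show ?thesis
    proof (rule main3, intro ballI)
      fix e' assume e': "e' \<in> E'"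
      have e'f: "e' * f \<in> F" using e' c E(2) f Fmul by blast
      show "\<exists>M. anchor_set E' \<Psi> M \<and>
          (\<lambda>m. m * e') ` M \<subseteq>
            {d * e | d e. d \<in> {d' \<in> anc E' \<Psi>. \<forall>e\<in>E. d' * e \<in> E'} \<and> e \<in> bracket E f}"
      proof (intro exI conjI)
        show "anchor_set E' \<Psi> (bracket E (e' * f))" by (rule brE_anchor[OF e'f])
        show "(\<lambda>m. m * e') ` bracket E (e' * f) \<subseteq>
            {d * e | d e. d \<in> {d' \<in> anc E' \<Psi>. \<forall>e\<in>E. d' * e \<in> E'} \<and> e \<in> bracket E f}"
        proof
          fix z assume "z \<in> (\<lambda>m. m * e') ` bracket E (e' * f)"
          then obtain m where m: "m \<in> bracket E (e' * f)" and z: "z = m * e'" by blast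
          have "m * e' \<in> E" using m e' c Emul unfolding bracket_def by auto
          moreover have "m * e' * f \<in> E" using m unfolding bracket_def by (auto simp: mult.assoc)
          ultimately have "m * e' \<in> bracket E f" unfolding bracket_def by simp
          moreover have "\<forall>e\<in>E. 1 * e \<in> E'" using c by simp
          ultimately show "z \<in> {d * e | d e. d \<in> {d' \<in> anc E' \<Psi>. \<forall>e\<in>E. d' * e \<in> E'} \<and> e \<in> bracket E f}"
          proof -
            have "1 \<in> {d' \<in> anc E' \<Psi>. \<forall>e\<in>E. d' * e \<in> E'}" using one_anc \<open>\<forall>e\<in>E. 1 * e \<in> E'\<close> by simp
            moreover have "z = 1 * (m * e')" using z by simp
            ultimately show ?thesis using \<open>m * e' \<in> bracket E f\<close> by blast
          qed
        qed
      qed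
    qed
  next
    have r5: ?thesis if c: "anchor_set E' \<Psi> (center E' \<inter> bracket E f)"
    proof (rule main3, intro ballI)
      fix e' assume e': "e' \<in> E'"
      show "\<exists>M. anchor_set E' \<Psi> M \<and>
          (\<lambda>m. m * e') ` M \<subseteq>
            {d * e | d e. d \<in> {d' \<in> anc E' \<Psi>. \<forall>e\<in>E. d' * e \<in> E'} \<and> e \<in> bracket E f}"
      proof (intro exI conjI)
        show "anchor_set E' \<Psi> (center E' \<inter> bracket E f)" by (rule c)
        show "(\<lambda>m. m * e') ` (center E' \<inter> bracket E f) \<subseteq>
            {d * e | d e. d \<in> {d' \<in> anc E' \<Psi>. \<forall>e\<in>E. d' * e \<in> E'} \<and> e \<in> bracket E f}"
        proof
          fix z assume "z \<in> (\<lambda>m. m * e') ` (center E' \<inter> bracket E f)"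
          then obtain m where m: "m \<in> center E'" "m \<in> bracket E f" and z: "z = m * e'" by blast
          have "m * e' = e' * m" using m(1) e' unfolding center_def by auto
          moreover have "\<forall>e\<in>E. e' * e \<in> E'" using e' E'(2) E'mul by blast
          ultimately show "z \<in> {d * e | d e. d \<in> {d' \<in> anc E' \<Psi>. \<forall>e\<in>E. d' * e \<in> E'} \<and> e \<in> bracket E f}"
            using z m(2) e' E'_in_anc by blast
        qed
      qed
    qed
    have r6: ?thesis if c: "E \<subseteq> center E'"
    proof (rule r5)
      have "center E' \<inter> bracket E f = bracket E f" using c unfolding bracket_def by auto
      thus "anchor_set E' \<Psi> (center E' \<inter> bracket E f)" using brE_anchor[OF f] by simp
    qed
    {
      assume c: "anchor_set E' \<Psi> (center E' \<inter> bracket E f)"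
      show ?thesis by (rule r5[OF c])
    next
      assume c: "E \<subseteq> center E'"
      show ?thesis by (rule r6[OF c])
    next
      assume c: "\<forall>a\<in>E'. \<forall>b\<in>E'. a * b = b * a"
      show ?thesis by (rule r6) (use c E'(2) in \<open>auto simp: center_def\<close>)
    }
  qed
qed

end
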